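(* Let $V$ be a finite set of $n$ elements and $w:\binom{V}{2}\to\mathbb{R}$ arbitrary real weights on its unordered pairs (not necessarily metric or nonnegative). Let $G$ be the complete graph on $V$ with edge weights $w$, let $T$ be a maximum-weight spanning tree of $G$, and let $\chi:V\to\{0,1\}$ be a proper 2-coloring of $T$. Then for every $\lambda\in\mathbb{R}$ and every $c\in\{0,\dots,n\}$: the graph $G_{>\lambda}$ admits a proper 2-coloring of cardinality $c$ if and only if $\mathrm{diam}(\chi)\le\lambda$ and $T_{>\lambda}$ admits a proper 2-coloring of cardinality $c$.
   Context: For a graph $H=(V,E)$ with edge weights $w$, $H_{>\lambda}$ denotes the spanning subgraph $(V,\{uv\in E: w(uv)>\lambda\})$. A 2-coloring $\varphi:V\to\{0,1\}$ is proper for a graph if the endpoints of every edge receive different colors; it has cardinality $c$ if one of its color classes has exactly $c$ elements. For $S\subseteq V$, $\mathrm{diam}(S)=\max_{\{u,v\}\subseteq S}w(uv)$, with $\mathrm{diam}(S)=-\infty$ if $|S|\le1$. For a 2-coloring $\varphi$, $\mathrm{diam}(\varphi)=\max\{\mathrm{diam}(\varphi^{-1}(0)),\mathrm{diam}(\varphi^{-1}(1))\}$, where diameters use all pair weights $w$. *)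

theory Defs
  imports Main "HOL-Library.Extended_Real"
begin

text \<open>Undirected simple graphs on a vertex set V are given by edge sets E of
  unordered pairs, an edge being a two-element set. Weights are functions on
  unordered pairs.\<close>

definition complete_edges :: "'a set \<Rightarrow> 'a set set" where
  "complete_edges V = {{u, v} | u v. u \<in> V \<and> v \<in> V \<and> u \<noteq> v}"

definition adj :: "'a set set \<Rightarrow> 'a \<Rightarrow> 'a \<Rightarrow> bool" where
  "adj E u v \<longleftrightarrow> {u, v} \<in> E"

definition connected_graph :: "'a set \<Rightarrow> 'a set set \<Rightarrow> bool" where
  "connected_graph V E \<longleftrightarrow> (\<forall>u\<in>V. \<forall>v\<in>V. (adj E)\<^sup>*\<^sup>* u v)"

definition is_cycle :: "'a set set \<Rightarrow> 'a list \<Rightarrow> bool" where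
  "is_cycle E xs \<longleftrightarrow> length xs \<ge> 3 \<and> distinct xs \<and>
     (\<forall>i < length xs. {xs ! i, xs ! ((i + 1) mod length xs)} \<in> E)"

definition acyclic_graph :: "'a set set \<Rightarrow> bool" where
  "acyclic_graph E \<longleftrightarrow> (\<nexists>xs. is_cycle E xs)"

definition spanning_tree :: "'a set \<Rightarrow> 'a set set \<Rightarrow> bool" where
  "spanning_tree V T \<longleftrightarrow> T \<subseteq> complete_edges V \<and> connected_graph V T \<and> acyclic_graph T"

definition max_spanning_tree :: "'a set \<Rightarrow> ('a set \<Rightarrow> real) \<Rightarrow> 'a set set \<Rightarrow> bool" where
  "max_spanning_tree V w T \<longleftrightarrow> spanning_tree V T \<and>
     (\<forall>T'. spanning_tree V T' \<longrightarrow> sum w T' \<le> sum w T)"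

definition above :: "('a set \<Rightarrow> real) \<Rightarrow> real \<Rightarrow> 'a set set \<Rightarrow> 'a set set" where
  "above w lam E = {e \<in> E. w e > lam}"

text \<open>2-colorings are maps into bool (False = colour 0, True = colour 1).\<close>
definition proper_col :: "'a set set \<Rightarrow> ('a \<Rightarrow> bool) \<Rightarrow> bool" where
  "proper_col E \<phi> \<longleftrightarrow> (\<forall>u v. {u, v} \<in> E \<longrightarrow> \<phi> u \<noteq> \<phi> v)"

definition has_cardinality :: "'a set \<Rightarrow> ('a \<Rightarrow> bool) \<Rightarrow> nat \<Rightarrow> bool" where
  "has_cardinality V \<phi> c \<longleftrightarrow> card {v \<in> V. \<not> \<phi> v} = c \<or> card {v \<in> V. \<phi> v} = c"

definition admits_proper_col_card :: "'a set \<Rightarrow> 'a set set \<Rightarrow> nat \<Rightarrow> bool" where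
  "admits_proper_col_card V E c \<longleftrightarrow> (\<exists>\<phi>. proper_col E \<phi> \<and> has_cardinality V \<phi> c)"

text \<open>diam(S) = max of pair weights in S, and -infinity if |S| <= 1.\<close>
definition diam :: "('a set \<Rightarrow> real) \<Rightarrow> 'a set \<Rightarrow> ereal" where
  "diam w S = Sup {ereal (w {u, v}) | u v. u \<in> S \<and> v \<in> S \<and> u \<noteq> v}"

definition diam_col :: "('a set \<Rightarrow> real) \<Rightarrow> 'a set \<Rightarrow> ('a \<Rightarrow> bool) \<Rightarrow> ereal" where
  "diam_col w V \<phi> = max (diam w {v \<in> V. \<not> \<phi> v}) (diam w {v \<in> V. \<phi> v})"

end

theory Submission
  imports Defs "HOL-Library.Transitive_Closure_Table"
begin

lemma adj_sym: "adj E a b \<Longrightarrow> adj E b a"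
  by (simp add: adj_def insert_commute)

lemma adj_rtr_sym: "(adj E)\<^sup>*\<^sup>* a b \<Longrightarrow> (adj E)\<^sup>*\<^sup>* b a"
proof (induction rule: rtranclp_induct)
  case base then show ?case by simp
next
  case (step y z)
  then show ?case using adj_sym
    by (metis converse_rtranclp_into_rtranclp)
qed

lemma acyc_sep:
  assumes "acyclic_graph E" "{x,y} \<in> E" "x \<noteq> y"
  shows "\<not> (adj (E - {{x,y}}))\<^sup>*\<^sup>* x y"
proof
  assume "(adj (E - {{x,y}}))\<^sup>*\<^sup>* x y"
  then obtain p0 where "rtrancl_path (adj (E - {{x,y}})) x p0 y"
    using rtranclp_eq_rtrancl_path by metis
  then obtain p where p: "rtrancl_path (adj (E - {{x,y}})) x p y" and d: "distinct (x # p)"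
    using rtrancl_path_distinct by metis
  have pne: "p \<noteq> []" using p assms(3) by (auto elim: rtrancl_path.cases)
  have lastp: "last p = y" using rtrancl_path_last[OF p pne] .
  have len: "length p \<ge> 2"
  proof (rule ccontr)
    assume "\<not> length p \<ge> 2"
    with pne have "length p = 1" by (cases p) (auto simp: Suc_le_eq)
    then obtain z where pz: "p = [z]" by (auto simp: length_Suc_conv)
    with lastp have "z = y" by simp
    with rtrancl_path_nth[OF p, of 0] pz show False by (simp add: adj_def)
  qed
  define c where "c = x # p"
  have "is_cycle E c"
    unfolding is_cycle_def
  proof (intro conjI allI impI)
    show "3 \<le> length c" using len c_def by simp
    show "distinct c" using d c_def by simp
    fix i assume i: "i < length c"
    show "{c ! i, c ! ((i + 1) mod length c)} \<in> E"
    proof (cases "i < length p")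
      case True
      then have "adj (E - {{x,y}}) (c ! i) (p ! i)" using rtrancl_path_nth[OF p] c_def by simp
      moreover have "(i + 1) mod length c = i + 1" using True c_def by simp
      ultimately show ?thesis using c_def by (simp add: adj_def)
    next
      case False
      then have ii: "i = length p" using i c_def by simp
      then have "c ! i = y" using c_def lastp pne by (simp add: last_conv_nth)
      moreover have "(i + 1) mod length c = 0" using ii c_def by simp
      ultimately show ?thesis using c_def assms(2) by (simp add: insert_commute)
    qed
  qed
  then show False using assms(1) unfolding acyclic_graph_def by blast
qed

lemma crossing:
  assumes "R\<^sup>*\<^sup>* a b" "a \<in> S" "b \<notin> S"
  shows "\<exists>x y. R x y \<and> x \<in> S \<and> y \<notin> S \<and> (\<lambda>p q. R p q \<and> p \<notin> S \<and> q \<notin> S)\<^sup>*\<^sup>* y b"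
  using assms
proof (induction rule: rtranclp_induct)
  case base then show ?case by simp
next
  case (step c b)
  show ?case
  proof (cases "c \<in> S")
    case True then show ?thesis using step by auto
  next
    case False
    then obtain x y where "R x y \<and> x \<in> S \<and> y \<notin> S \<and> (\<lambda>p q. R p q \<and> p \<notin> S \<and> q \<notin> S)\<^sup>*\<^sup>* y c"
      using step by blast
    then show ?thesis using step False
      by (metis (mono_tags, lifting) rtranclp.rtrancl_into_rtrancl)
  qed
qed

lemma rtr_cover:
  assumes "\<And>p q. R p q \<Longrightarrow> Q\<^sup>*\<^sup>* p q" "R\<^sup>*\<^sup>* a b"
  shows "Q\<^sup>*\<^sup>* a b"
  using assms(2)
proof (induction rule: rtranclp_induct)
  case base then show ?case by simp
next
  case (step y z) then show ?case using assms(1) by (meson rtranclp_trans)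
qed

lemma cycle_walk:
  assumes c: "is_cycle E' xs" and i: "i < length xs"
    and e: "\<And>j. j < length xs \<Longrightarrow> j \<noteq> i \<Longrightarrow> {xs ! j, xs ! ((j + 1) mod length xs)} \<in> F"
  shows "(adj F)\<^sup>*\<^sup>* (xs ! ((i + 1) mod length xs)) (xs ! i)"
proof -
  define L where "L = length xs"
  have L3: "L \<ge> 3" using c unfolding is_cycle_def L_def by simp
  have "\<forall>k. k < L \<longrightarrow> (adj F)\<^sup>*\<^sup>* (xs ! ((i + 1) mod L)) (xs ! ((i + 1 + k) mod L))"
  proof (intro allI)
    fix k show "k < L \<longrightarrow> (adj F)\<^sup>*\<^sup>* (xs ! ((i + 1) mod L)) (xs ! ((i + 1 + k) mod L))"
    proof (induction k)
      case 0 then show ?case by simp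
    next
      case (Suc k)
      show ?case
      proof
        assume k: "Suc k < L"
        define j where "j = (i + 1 + k) mod L"
        have jL: "j < L" using L3 j_def by simp
        have ji: "j \<noteq> i"
        proof
          assume "j = i"
          then have h: "(i + 1 + k) mod L = i" using j_def by simp
          have iL: "i < L" using i L_def by simp
          show False
          proof (cases "i + 1 + k < L")
            case True then show ?thesis using h by simp
          next
            case False
            then have "(i + 1 + k) mod L = (i + 1 + k - L) mod L" by (simp add: le_mod_geq)
            also have "\<dots> = i + 1 + k - L" using iL k by simp
            finally show ?thesis using h k iL False by simp
          qed
        qed
        have "{xs ! j, xs ! ((j + 1) mod L)} \<in> F" using e jL ji L_def by simp
        moreover have "(j + 1) mod L = (i + 1 + Suc k) mod L" using j_def
          by (simp add: mod_Suc_eq)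
        ultimately have "adj F (xs ! ((i + 1 + k) mod L)) (xs ! ((i + 1 + Suc k) mod L))"
          using j_def by (simp add: adj_def)
        then show "(adj F)\<^sup>*\<^sup>* (xs ! ((i + 1) mod L)) (xs ! ((i + 1 + Suc k) mod L))"
          using Suc k by (meson Suc_lessD rtranclp.rtrancl_into_rtrancl)
      qed
    qed
  qed
  moreover have "L - 1 < L" using L3 by simp
  ultimately have "(adj F)\<^sup>*\<^sup>* (xs ! ((i + 1) mod L)) (xs ! ((i + 1 + (L - 1)) mod L))"
    by blast
  moreover have "(i + 1 + (L - 1)) mod L = i"
  proof -
    have "i + 1 + (L - 1) = i + L" using L3 by simp
    then show ?thesis using i L_def by simp
  qed
  ultimately show ?thesis using L_def by simp
qed

lemma cyc_edge_inj:
  assumes c: "is_cycle E xs" and i: "i < length xs" and j: "j < length xs"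
    and eq: "{xs ! i, xs ! ((i + 1) mod length xs)} = {xs ! j, xs ! ((j + 1) mod length xs)}"
  shows "i = j"
proof (rule ccontr)
  assume nij: "i \<noteq> j"
  define L where "L = length xs"
  have L3: "L \<ge> 3" and d: "distinct xs" using c unfolding is_cycle_def L_def by auto
  have i1: "(i + 1) mod L < L" and j1: "(j + 1) mod L < L" using L3 by auto
  have "xs ! i \<noteq> xs ! j" using nij d i j by (simp add: nth_eq_iff_index_eq)
  then have e: "xs ! i = xs ! ((j + 1) mod L) \<and> xs ! ((i + 1) mod L) = xs ! j"
    using eq L_def by (simp add: doubleton_eq_iff)
  have iL: "i < L" and jL: "j < L" using i j L_def by auto
  have h1: "i = (j + 1) mod L"
    using e nth_eq_iff_index_eq[OF d, of i "(j + 1) mod L"] iL j1 L_def by simp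
  have h2: "(i + 1) mod L = j"
    using e nth_eq_iff_index_eq[OF d, of "(i + 1) mod L" j] jL i1 L_def by simp
  have h3: "(i + 1 + 1) mod L = i"
  proof (cases "i + 1 < L")
    case True
    then have "j = i + 1" using h2 by simp
    then show ?thesis using h1 by simp
  next
    case False
    then have "i + 1 = L" using iL by simp
    then have "j = 0" using h2 by simp
    then show ?thesis using h1 \<open>i + 1 = L\<close> L3 by simp
  qed
  show False
  proof (cases "i + 2 < L")
    case True then show False using h3 by simp
  next
    case False
    then have "i + 2 = L \<or> i + 1 = L" using iL by linarith
    then show False
    proof
      assume "i + 2 = L" then show False using h3 L3 by auto
    next
      assume a1: "i + 1 = L"
      then have "i + 1 + 1 = L + 1" by simp
      then have "(i + 1 + 1) mod L = (1 + L) mod L" by simp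
      also have "\<dots> = 1" using L3 by (simp add: mod_Suc)
      finally have "(i + 1 + 1) mod L = 1" .
      then show False using h3 a1 L3 by simp
    qed
  qed
qed

lemma key:
  assumes fin: "finite V" and mst: "max_spanning_tree V w T" and uv: "u \<in> V" "v \<in> V" "u \<noteq> v"
  shows "(adj {e \<in> T. w e \<ge> w {u, v}})\<^sup>*\<^sup>* u v"
proof (rule ccontr)
  define a where "a = w {u, v}"
  define Ta where "Ta = {e \<in> T. w e \<ge> a}"
  define S where "S = {z. (adj Ta)\<^sup>*\<^sup>* u z}"
  assume nv: "\<not> (adj {e \<in> T. w e \<ge> w {u, v}})\<^sup>*\<^sup>* u v"
  then have vS: "v \<notin> S" using S_def Ta_def a_def by simp
  have uS: "u \<in> S" using S_def by simp
  have st: "spanning_tree V T" using mst unfolding max_spanning_tree_def by blast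
  have Tsub: "T \<subseteq> complete_edges V" and acT: "acyclic_graph T" and conT: "connected_graph V T"
    using st unfolding spanning_tree_def by auto
  have "(adj T)\<^sup>*\<^sup>* u v" using conT uv unfolding connected_graph_def by blast
  from crossing[OF this uS vS] obtain x y where xy: "adj T x y" "x \<in> S" "y \<notin> S"
    and yv: "(\<lambda>p q. adj T p q \<and> p \<notin> S \<and> q \<notin> S)\<^sup>*\<^sup>* y v" by blast
  have wxy: "w {x, y} < a"
  proof (rule ccontr)
    assume "\<not> w {x, y} < a"
    then have "adj Ta x y" using xy(1) unfolding Ta_def adj_def by auto
    then have "(adj Ta)\<^sup>*\<^sup>* u y" using xy(2) S_def by (simp add: rtranclp.rtrancl_into_rtrancl)
    then show False using xy(3) S_def by simp
  qed
  have xney: "x \<noteq> y" using xy by auto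
  define E1 where "E1 = T - {{x, y}}"
  have Ta_E1: "Ta \<subseteq> E1" using wxy unfolding Ta_def E1_def by auto
  have ux: "(adj E1)\<^sup>*\<^sup>* u x"
  proof (rule rtr_cover[of "adj Ta"])
    show "(adj Ta)\<^sup>*\<^sup>* u x" using xy(2) S_def by simp
  next
    fix p q assume "adj Ta p q"
    then have "adj E1 p q" using Ta_E1 unfolding adj_def by auto
    then show "(adj E1)\<^sup>*\<^sup>* p q" by simp
  qed
  have yv1: "(adj E1)\<^sup>*\<^sup>* y v"
  proof (rule rtr_cover[OF _ yv])
    fix p q assume h: "adj T p q \<and> p \<notin> S \<and> q \<notin> S"
    then have "{p, q} \<noteq> {x, y}" using xy(2) by (auto simp: doubleton_eq_iff)
    then have "adj E1 p q" using h unfolding E1_def adj_def by auto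
    then show "(adj E1)\<^sup>*\<^sup>* p q" by simp
  qed
  have nxy: "\<not> (adj E1)\<^sup>*\<^sup>* x y"
    using acyc_sep[OF acT _ xney] xy(1) unfolding adj_def E1_def by blast
  have nuv: "\<not> (adj E1)\<^sup>*\<^sup>* u v"
  proof
    assume "(adj E1)\<^sup>*\<^sup>* u v"
    then have "(adj E1)\<^sup>*\<^sup>* x y" using adj_rtr_sym[OF ux] adj_rtr_sym[OF yv1] by (meson rtranclp_trans)
    then show False using nxy by simp
  qed
  define T' where "T' = insert {u, v} E1"
  have E1T': "E1 \<subseteq> T'" unfolding T'_def by auto
  have uvT: "{u, v} \<notin> T"
  proof
    assume "{u, v} \<in> T"
    then have "adj Ta u v" unfolding Ta_def a_def adj_def by simp
    then show False using vS unfolding S_def by (simp add: r_into_rtranclp)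
  qed
  have sub': "T' \<subseteq> complete_edges V"
  proof -
    have "{u, v} \<in> complete_edges V" unfolding complete_edges_def using uv by blast
    then show ?thesis using Tsub unfolding E1_def T'_def by blast
  qed
  have xy': "(adj T')\<^sup>*\<^sup>* x y"
  proof -
    have m: "\<And>p q. (adj E1)\<^sup>*\<^sup>* p q \<Longrightarrow> (adj T')\<^sup>*\<^sup>* p q"
    proof -
      fix p q assume "(adj E1)\<^sup>*\<^sup>* p q"
      then show "(adj T')\<^sup>*\<^sup>* p q"
        by (rule rtr_cover[rotated]) (auto simp: adj_def T'_def intro: r_into_rtranclp)
    qed
    have "adj T' u v" unfolding T'_def adj_def by simp
    with m[OF adj_rtr_sym[OF ux]] have "(adj T')\<^sup>*\<^sup>* x v"
      by (rule rtranclp.rtrancl_into_rtrancl)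
    then show ?thesis using m[OF adj_rtr_sym[OF yv1]] by (rule rtranclp_trans)
  qed
  have con': "connected_graph V T'"
    unfolding connected_graph_def
  proof (intro ballI)
    fix p q assume "p \<in> V" "q \<in> V"
    then have "(adj T)\<^sup>*\<^sup>* p q" using conT unfolding connected_graph_def by blast
    then show "(adj T')\<^sup>*\<^sup>* p q"
    proof (rule rtr_cover[rotated])
      fix p q assume "adj T p q"
      show "(adj T')\<^sup>*\<^sup>* p q"
      proof (cases "{p, q} = {x, y}")
        case True
        then have "(p = x \<and> q = y) \<or> (p = y \<and> q = x)" by (auto simp: doubleton_eq_iff)
        then show ?thesis using xy' adj_rtr_sym[OF xy'] by auto
      next
        case False
        then have "adj T' p q" using \<open>adj T p q\<close> unfolding E1_def T'_def adj_def by auto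
        then show ?thesis by simp
      qed
    qed
  qed
  have acy': "acyclic_graph T'"
    unfolding acyclic_graph_def
  proof
    assume "\<exists>xs. is_cycle T' xs"
    then obtain xs where c: "is_cycle T' xs" by blast
    define L where "L = length xs"
    show False
    proof (cases "\<forall>i < L. {xs ! i, xs ! ((i + 1) mod L)} \<in> E1")
      case True
      then have "is_cycle T xs" using c unfolding E1_def L_def is_cycle_def by auto
      then show False using acT unfolding acyclic_graph_def by blast
    next
      case False
      then obtain i where i: "i < L" and ni: "{xs ! i, xs ! ((i + 1) mod L)} \<notin> E1" by blast
      then have ei: "{xs ! i, xs ! ((i + 1) mod L)} = {u, v}"
        using c unfolding L_def T'_def is_cycle_def by auto
      have "(adj E1)\<^sup>*\<^sup>* (xs ! ((i + 1) mod length xs)) (xs ! i)"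
      proof (rule cycle_walk[OF c])
        show "i < length xs" using i L_def by simp
      next
        fix j assume j: "j < length xs" "j \<noteq> i"
        have "{xs ! j, xs ! ((j + 1) mod length xs)} \<in> T'" using c j unfolding is_cycle_def by auto
        moreover have "{xs ! j, xs ! ((j + 1) mod length xs)} \<noteq> {u, v}"
          using cyc_edge_inj[OF c, of i j] ei i j L_def by auto
        ultimately show "{xs ! j, xs ! ((j + 1) mod length xs)} \<in> E1" unfolding T'_def by auto
      qed
      moreover have "(xs ! i = u \<and> xs ! ((i + 1) mod length xs) = v) \<or> (xs ! i = v \<and> xs ! ((i + 1) mod length xs) = u)"
        using ei unfolding L_def by (auto simp: doubleton_eq_iff)
      ultimately show False using nuv adj_rtr_sym[of E1 v u] by auto
    qed
  qed
  have st': "spanning_tree V T'" using sub' con' acy' unfolding spanning_tree_def by blast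
  have finT: "finite T"
  proof -
    have "complete_edges V \<subseteq> Pow V" by (auto simp: complete_edges_def)
    then have "finite (complete_edges V)" using fin by (meson finite_Pow_iff finite_subset)
    then show ?thesis using Tsub by (rule finite_subset[rotated])
  qed
  have "{u, v} \<notin> E1" using uvT unfolding E1_def by simp
  then have s1: "sum w T' = w {u, v} + sum w E1"
    unfolding T'_def using finT E1_def by simp
  have s2: "sum w T = w {x, y} + sum w E1"
    using xy(1) finT unfolding E1_def adj_def by (simp add: sum.remove)
  have "sum w T' > sum w T" using s1 s2 wxy a_def by simp
  moreover have "sum w T' \<le> sum w T" using mst st' unfolding max_spanning_tree_def by blast
  ultimately show False by simp
qed

lemma parity:
  assumes "(adj E')\<^sup>*\<^sup>* p q" "E' \<subseteq> E" "E' \<subseteq> F" "proper_col E \<chi>" "proper_col F \<phi>"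
  shows "(\<chi> p = \<chi> q) \<longleftrightarrow> (\<phi> p = \<phi> q)"
  using assms(1)
proof (induction rule: rtranclp_induct)
  case base then show ?case by simp
next
  case (step y z)
  then have "{y, z} \<in> E" "{y, z} \<in> F" using assms(2,3) unfolding adj_def by auto
  then have "\<chi> y \<noteq> \<chi> z" "\<phi> y \<noteq> \<phi> z" using assms(4,5) unfolding proper_col_def by auto
  then show ?case using step.IH by auto
qed

lemma proper_mono: "proper_col E \<phi> \<Longrightarrow> F \<subseteq> E \<Longrightarrow> proper_col F \<phi>"
  unfolding proper_col_def by blast

lemma diam_le:
  assumes "\<And>u v. u \<in> S \<Longrightarrow> v \<in> S \<Longrightarrow> u \<noteq> v \<Longrightarrow> w {u, v} \<le> lam"
  shows "diam w S \<le> ereal lam"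
  unfolding diam_def using assms by (auto intro!: Sup_least)

lemma diam_ge:
  assumes "u \<in> S" "v \<in> S" "u \<noteq> v"
  shows "ereal (w {u, v}) \<le> diam w S"
  unfolding diam_def using assms by (auto intro!: Sup_upper)

lemma complete_edge_mem:
  assumes "{a, b} \<in> complete_edges V"
  shows "a \<in> V" "b \<in> V" "a \<noteq> b"
  using assms unfolding complete_edges_def by (auto simp: doubleton_eq_iff)

theorem lemma1:
  fixes V :: "'a set" and n :: nat and w :: "'a set \<Rightarrow> real"
    and T :: "'a set set" and \<chi> :: "'a \<Rightarrow> bool"
  assumes "finite V" and "card V = n"
    and "max_spanning_tree V w T"
    and "proper_col T \<chi>"
  shows "\<forall>(lam::real) (c::nat). c \<le> n \<longrightarrow>
           (admits_proper_col_card V (above w lam (complete_edges V)) c \<longleftrightarrow>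
            diam_col w V \<chi> \<le> ereal lam \<and> admits_proper_col_card V (above w lam T) c)"
proof (intro allI impI)
  fix lam :: real and c :: nat
  define G where "G = above w lam (complete_edges V)"
  have Tsub: "T \<subseteq> complete_edges V"
    using assms(3) unfolding max_spanning_tree_def spanning_tree_def by blast
  have TG: "above w lam T \<subseteq> G" using Tsub unfolding G_def above_def by blast
  have walk: "\<And>u v. u \<in> V \<Longrightarrow> v \<in> V \<Longrightarrow> u \<noteq> v \<Longrightarrow> w {u, v} > lam \<Longrightarrow>
      (adj {e \<in> T. w e \<ge> w {u, v}})\<^sup>*\<^sup>* u v \<and> {e \<in> T. w e \<ge> w {u, v}} \<subseteq> above w lam T"
    using key[OF assms(1) assms(3)] unfolding above_def by fastforce
  show "admits_proper_col_card V G c \<longleftrightarrow>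
            diam_col w V \<chi> \<le> ereal lam \<and> admits_proper_col_card V (above w lam T) c"
  proof
    assume "admits_proper_col_card V G c"
    then obtain \<phi> where ph: "proper_col G \<phi>" "has_cardinality V \<phi> c"
      unfolding admits_proper_col_card_def by blast
    have "proper_col (above w lam T) \<phi>" using proper_mono[OF ph(1) TG] .
    then have A: "admits_proper_col_card V (above w lam T) c"
      using ph(2) unfolding admits_proper_col_card_def by blast
    have same: "w {u, v} \<le> lam" if "u \<in> V" "v \<in> V" "u \<noteq> v" "\<chi> u = \<chi> v" for u v
    proof (rule ccontr)
      assume "\<not> w {u, v} \<le> lam"
      then have gt: "w {u, v} > lam" by simp
      from walk[OF that(1-3) gt] have W: "(adj {e \<in> T. w e \<ge> w {u, v}})\<^sup>*\<^sup>* u v"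
        and sub: "{e \<in> T. w e \<ge> w {u, v}} \<subseteq> above w lam T" by auto
      have "\<phi> u = \<phi> v"
        using parity[OF W _ _ assms(4) ph(1)] sub TG that(4) by blast
      moreover have "{u, v} \<in> G" using that gt unfolding G_def above_def complete_edges_def by blast
      ultimately show False using ph(1) unfolding proper_col_def by blast
    qed
    have "diam w {v \<in> V. \<not> \<chi> v} \<le> ereal lam" by (rule diam_le) (use same in auto)
    moreover have "diam w {v \<in> V. \<chi> v} \<le> ereal lam" by (rule diam_le) (use same in auto)
    ultimately have "diam_col w V \<chi> \<le> ereal lam" unfolding diam_col_def by simp
    then show "diam_col w V \<chi> \<le> ereal lam \<and> admits_proper_col_card V (above w lam T) c"
      using A by blast
  next
    assume "diam_col w V \<chi> \<le> ereal lam \<and> admits_proper_col_card V (above w lam T) c"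
    then have D: "diam_col w V \<chi> \<le> ereal lam" and "admits_proper_col_card V (above w lam T) c"
      by auto
    then obtain \<phi> where ph: "proper_col (above w lam T) \<phi>" "has_cardinality V \<phi> c"
      unfolding admits_proper_col_card_def by blast
    have "proper_col G \<phi>"
      unfolding proper_col_def
    proof (intro allI impI)
      fix a b assume ab: "{a, b} \<in> G"
      then have e: "{a, b} \<in> complete_edges V" and gt: "w {a, b} > lam"
        unfolding G_def above_def by auto
      note m = complete_edge_mem[OF e]
      have "\<chi> a \<noteq> \<chi> b"
      proof
        assume eq: "\<chi> a = \<chi> b"
        define S where "S = {v \<in> V. \<chi> v = \<chi> a}"
        have "S = {v \<in> V. \<not> \<chi> v} \<or> S = {v \<in> V. \<chi> v}" unfolding S_def by (cases "\<chi> a") auto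
        then have "diam w S \<le> diam_col w V \<chi>" unfolding diam_col_def by auto
        moreover have "ereal (w {a, b}) \<le> diam w S"
          by (rule diam_ge) (use m eq in \<open>auto simp: S_def\<close>)
        ultimately have "ereal (w {a, b}) \<le> ereal lam" using D by (meson order_trans)
        then show False using gt by simp
      qed
      moreover from walk[OF m gt] have W: "(adj {e \<in> T. w e \<ge> w {a, b}})\<^sup>*\<^sup>* a b"
        and sub: "{e \<in> T. w e \<ge> w {a, b}} \<subseteq> above w lam T" by auto
      ultimately show "\<phi> a \<noteq> \<phi> b"
        using parity[OF W _ sub assms(4) ph(1)] by blast
    qed
    then show "admits_proper_col_card V G c"
      using ph(2) unfolding admits_proper_col_card_def by blast
  qed
qed

end
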